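(* Let $H$ be a complex Hilbert space, $\varphi,\psi:[0,1]\to\mathbb{R}$ continuous, $A\in\mathbb{B}(H)$, $t\in[0,1]$, and put $m(t)=\min\{|\varphi(t)+\psi(t)|,|\varphi(t)-\psi(t)|\}$. Then (1) $\omega_t(\varphi,\psi;A)\ge m(t)\Big(\frac{\|A\|}{2}+\frac{\big|\|\operatorname{Re}A\|-\|\operatorname{Im}A\|\big|}{2}\Big)$; (2) $\omega_t^2(\varphi,\psi;A)\ge m(t)^2\Big(\frac14\|A^*A+AA^*\|+\frac{\big|\|\operatorname{Re}A\|^2-\|\operatorname{Im}A\|^2\big|}{2}\Big)$; (3) $\omega_t^2(\varphi,\psi;A)\ge m(t)^2\Big(\frac14\|A^*A+AA^*\|+\frac{c^2(\operatorname{Re}A)+c^2(\operatorname{Im}A)}{2}+\Big|\frac{\|\operatorname{Re}A\|^2-\|\operatorname{Im}A\|^2}{2}+\frac{c^2(\operatorname{Im}A)-c^2(\operatorname{Re}A)}{2}\Big|\Big)$; (4) $\omega_t^4(\varphi,\psi;A)\ge m(t)^4\Big(\frac1{16}\big\|(A^*A+AA^* )^2+4(\operatorname{Re}(A^2))^2\big\|+\frac12\big|\|\operatorname{Re}A\|^4-\|\operatorname{Im}A\|^4\big|\Big)$.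
   Context: $\operatorname{Re}A=(A+A^* )/2$, $\operatorname{Im}A=(A-A^* )/(2i)$, $S_1(H)$ is the unit sphere of $H$, $c(T)=\inf_{x\in S_1(H)}|\langle Tx,x\rangle|$ is the Crawford number, and $\omega_t(\varphi,\psi;A)=\sup_{x\in S_1(H)}|\langle(\varphi(t)A+\psi(t)A^* )x,x\rangle|$. *)

theory Defs
  imports Complex_Main
begin

class complex_hilbert = ab_group_add +
  fixes scaleC :: "complex \<Rightarrow> 'a \<Rightarrow> 'a"
    and cinner :: "'a \<Rightarrow> 'a \<Rightarrow> complex"
  assumes scaleC_add_right: "scaleC a (x + y) = scaleC a x + scaleC a y"
    and scaleC_add_left: "scaleC (a + b) x = scaleC a x + scaleC b x"
    and scaleC_scaleC: "scaleC a (scaleC b x) = scaleC (a * b) x"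
    and scaleC_one: "scaleC 1 x = x"
    and cinner_add_left: "cinner (x + y) z = cinner x z + cinner y z"
    and cinner_scaleC_left: "cinner (scaleC a x) y = a * cinner x y"
    and cinner_commute: "cinner y x = cnj (cinner x y)"
    and cinner_nonneg: "0 \<le> Re (cinner x x)"
    and cinner_zero_iff: "cinner x x = 0 \<longleftrightarrow> x = 0"
    and hilbert_complete:
      "(\<forall>e>0. \<exists>N. \<forall>m\<ge>N. \<forall>n\<ge>N. sqrt (Re (cinner (X m - X n) (X m - X n))) < e)
        \<Longrightarrow> (\<exists>L. (\<lambda>n. sqrt (Re (cinner (X n - L) (X n - L)))) \<longlonglongrightarrow> 0)"

definition hnorm :: "'a::complex_hilbert \<Rightarrow> real" where
  "hnorm x = sqrt (Re (cinner x x))"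

definition clinear_op :: "('a::complex_hilbert \<Rightarrow> 'a) \<Rightarrow> bool" where
  "clinear_op A \<longleftrightarrow> (\<forall>x y. A (x + y) = A x + A y) \<and> (\<forall>a x. A (scaleC a x) = scaleC a (A x))"

definition bounded_op :: "('a::complex_hilbert \<Rightarrow> 'a) \<Rightarrow> bool" where
  "bounded_op A \<longleftrightarrow> clinear_op A \<and> (\<exists>K. \<forall>x. hnorm (A x) \<le> K * hnorm x)"

definition is_adjoint :: "('a::complex_hilbert \<Rightarrow> 'a) \<Rightarrow> ('a \<Rightarrow> 'a) \<Rightarrow> bool" where
  "is_adjoint A B \<longleftrightarrow> (\<forall>x y. cinner (A x) y = cinner x (B y))"

definition opnorm :: "('a::complex_hilbert \<Rightarrow> 'a) \<Rightarrow> real" where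
  "opnorm A = Sup {hnorm (A x) | x. hnorm x \<le> 1}"

definition ReOp :: "('a::complex_hilbert \<Rightarrow> 'a) \<Rightarrow> ('a \<Rightarrow> 'a) \<Rightarrow> 'a \<Rightarrow> 'a" where
  "ReOp A As = (\<lambda>x. scaleC (1/2) (A x + As x))"

definition ImOp :: "('a::complex_hilbert \<Rightarrow> 'a) \<Rightarrow> ('a \<Rightarrow> 'a) \<Rightarrow> 'a \<Rightarrow> 'a" where
  "ImOp A As = (\<lambda>x. scaleC (1/(2*\<i>)) (A x - As x))"

definition crawford :: "('a::complex_hilbert \<Rightarrow> 'a) \<Rightarrow> real" where
  "crawford T = Inf {cmod (cinner (T x) x) | x. hnorm x = 1}"

definition omega_t :: "real \<Rightarrow> (real \<Rightarrow> real) \<Rightarrow> (real \<Rightarrow> real) \<Rightarrow> ('a::complex_hilbert \<Rightarrow> 'a) \<Rightarrow> ('a \<Rightarrow> 'a) \<Rightarrow> real" where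
  "omega_t t \<phi> \<psi> A As = Sup {cmod (cinner (scaleC (complex_of_real (\<phi> t)) (A x)
                                + scaleC (complex_of_real (\<psi> t)) (As x)) x) | x. hnorm x = 1}"

end

theory Submission
  imports Defs
begin



lemma scaleC_zero_left[simp]: "scaleC 0 (x::'a::complex_hilbert) = 0"
proof -
  have "scaleC (0+0) x = scaleC 0 x + scaleC 0 x" by (rule scaleC_add_left)
  then show ?thesis by simp
qed

lemma scaleC_zero_right[simp]: "scaleC a (0::'a::complex_hilbert) = 0"
proof -
  have "scaleC a (0+0) = scaleC a 0 + scaleC a 0" by (rule scaleC_add_right)
  then show ?thesis by simp
qed

lemma scaleC_minus_right: "scaleC a (- (x::'a::complex_hilbert)) = - scaleC a x"
proof -
  have "scaleC a (x + - x) = scaleC a x + scaleC a (-x)" by (rule scaleC_add_right)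
  then have "scaleC a x + scaleC a (-x) = 0" by simp
  from minus_unique[OF this] show ?thesis by simp
qed

lemma scaleC_diff_right: "scaleC a ((x::'a::complex_hilbert) - y) = scaleC a x - scaleC a y"
  using scaleC_add_right[of a x "-y"] by (simp add: scaleC_minus_right)

lemma cinner_zero_left[simp]: "cinner 0 (y::'a::complex_hilbert) = 0"
proof -
  have "cinner (0+0) y = cinner 0 y + cinner 0 y" by (rule cinner_add_left)
  then show ?thesis by simp
qed

lemma cinner_minus_left: "cinner (- x) (y::'a::complex_hilbert) = - cinner x y"
proof -
  have "cinner (x + - x) y = cinner x y + cinner (-x) y" by (rule cinner_add_left)
  then have "cinner x y + cinner (-x) y = 0" by simp
  from minus_unique[OF this] show ?thesis by simp
qed

lemma cinner_diff_left: "cinner (x - y) (z::'a::complex_hilbert) = cinner x z - cinner y z"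
  using cinner_add_left[of x "-y" z] by (simp add: cinner_minus_left)

lemma cinner_add_right: "cinner x (y + (z::'a::complex_hilbert)) = cinner x y + cinner x z"
  apply (subst (1 2 3) cinner_commute) by (simp add: cinner_add_left)

lemma cinner_scaleC_right: "cinner x (scaleC a (y::'a::complex_hilbert)) = cnj a * cinner x y"
  apply (subst (1 2) cinner_commute) by (simp add: cinner_scaleC_left)

lemma cinner_zero_right[simp]: "cinner (x::'a::complex_hilbert) 0 = 0"
  apply (subst cinner_commute) by simp

lemma cinner_minus_right: "cinner x (- (y::'a::complex_hilbert)) = - cinner x y"
  apply (subst (1 2) cinner_commute) by (simp add: cinner_minus_left)

lemma cinner_diff_right: "cinner x (y - (z::'a::complex_hilbert)) = cinner x y - cinner x z"
  apply (subst (1 2 3) cinner_commute) by (simp add: cinner_diff_left)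

lemmas cinner_simps = cinner_add_left cinner_add_right cinner_scaleC_left cinner_scaleC_right
  cinner_minus_left cinner_minus_right cinner_diff_left cinner_diff_right

lemma cinner_ext: fixes u v :: "'a::complex_hilbert" assumes "\<And>y. cinner u y = cinner v y" shows "u = v"
proof -
  have "cinner (u - v) (u - v) = 0" using assms by (simp add: cinner_diff_left)
  then have "u - v = 0" using cinner_zero_iff by blast
  then show ?thesis by simp
qed

lemma cinner_ext2: fixes u v :: "'a::complex_hilbert" assumes "\<And>y. cinner y u = cinner y v" shows "u = v"
  apply (rule cinner_ext) apply (subst (1 2) cinner_commute) by (simp add: assms)

lemma cinner_self_Im: "Im (cinner x x) = 0" for x :: "'a::complex_hilbert"
proof -
  have e: "cinner x x = cnj (cinner x x)" by (rule cinner_commute)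
  have "Im (cinner x x) = Im (cnj (cinner x x))" using e by metis
  also have "\<dots> = - Im (cinner x x)" by simp
  finally show ?thesis by linarith
qed

lemma cinner_self_real: "cinner x x = complex_of_real (Re (cinner x x))" for x :: "'a::complex_hilbert"
  using cinner_self_Im complex_eq_iff by auto

lemma hnorm_nonneg[simp]: "0 \<le> hnorm x"
  by (simp add: hnorm_def cinner_nonneg)

lemma hnorm_sq: "(hnorm x)^2 = Re (cinner x x)"
  by (simp add: hnorm_def cinner_nonneg)

lemma cinner_self_eq: "cinner x x = complex_of_real ((hnorm x)^2)"
  by (metis cinner_self_real hnorm_sq)

lemma hnorm_zero[simp]: "hnorm (0::'a::complex_hilbert) = 0"
  by (simp add: hnorm_def)

lemma hnorm_eq_zero: "hnorm x = 0 \<longleftrightarrow> x = 0"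
  by (metis cinner_self_eq cinner_zero_iff hnorm_zero of_real_0 power_zero_numeral zero_less_numeral
        power_eq_0_iff)

lemma hnorm_scaleC: "hnorm (scaleC a x) = cmod a * hnorm x"
proof -
  have "cinner (scaleC a x) (scaleC a x) = (a * cnj a) * cinner x x"
    by (simp add: cinner_simps)
  also have "\<dots> = complex_of_real ((cmod a)^2 * Re (cinner x x))"
    by (subst cinner_self_real, subst complex_norm_square[symmetric]) simp
  finally have "Re (cinner (scaleC a x) (scaleC a x)) = (cmod a)^2 * Re (cinner x x)"
    by simp
  then show ?thesis
    by (simp add: hnorm_def real_sqrt_mult)
qed

lemma cauchy_schwarz: "cmod (cinner x y) \<le> hnorm x * hnorm y"
proof (cases "y = 0")
  case True then show ?thesis by simp
next
  case False
  define Y where "Y = (hnorm y)^2"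
  define c where "c = cinner x y"
  have Ypos: "Y > 0" using False hnorm_eq_zero hnorm_nonneg unfolding Y_def
    by (metis order_less_le zero_less_power)
  define t where "t = c / complex_of_real Y"
  have yy: "cinner y y = complex_of_real Y" by (simp add: Y_def cinner_self_eq)
  have yx: "cinner y x = cnj c" by (simp add: c_def cinner_commute[of y x])
  have "cinner (x - scaleC t y) (x - scaleC t y)
        = cinner x x - cnj t * c - t * cnj c + t * cnj t * complex_of_real Y"
    by (simp add: cinner_simps yy yx c_def algebra_simps)
  also have "\<dots> = cinner x x - c * cnj c / complex_of_real Y"
    using Ypos by (simp add: t_def field_simps power2_eq_square)
  also have "\<dots> = complex_of_real ((hnorm x)^2 - (cmod c)^2 / Y)"
    by (simp add: cinner_self_eq complex_norm_square[symmetric])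
  finally have "0 \<le> (hnorm x)^2 - (cmod c)^2 / Y"
    by (metis Re_complex_of_real cinner_nonneg)
  then have "(cmod c)^2 \<le> (hnorm x)^2 * (hnorm y)^2"
    using Ypos by (simp add: Y_def field_simps)
  then have "(cmod c)^2 \<le> (hnorm x * hnorm y)^2" by (simp add: power_mult_distrib)
  then show ?thesis unfolding c_def
    by (meson hnorm_nonneg mult_nonneg_nonneg power2_le_imp_le)
qed

lemma hnorm_add_sq: "(hnorm (x + y))^2 = (hnorm x)^2 + (hnorm y)^2 + 2 * Re (cinner x y)"
proof -
  have "Re (cinner y x) = Re (cinner x y)" by (simp add: cinner_commute[of y x])
  then show ?thesis by (simp add: hnorm_sq cinner_simps)
qed

lemma hnorm_diff_sq: "(hnorm (x - y))^2 = (hnorm x)^2 + (hnorm y)^2 - 2 * Re (cinner x y)"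
proof -
  have "Re (cinner y x) = Re (cinner x y)" by (simp add: cinner_commute[of y x])
  then show ?thesis by (simp add: hnorm_sq cinner_simps)
qed

lemma hnorm_triangle: "hnorm (x + y) \<le> hnorm x + hnorm y"
proof -
  have "Re (cinner x y) \<le> hnorm x * hnorm y"
    using cauchy_schwarz[of x y] complex_Re_le_cmod order_trans by blast
  then have "(hnorm (x + y))^2 \<le> (hnorm x + hnorm y)^2"
    by (simp add: hnorm_add_sq power2_sum)
  then show ?thesis by (meson add_nonneg_nonneg hnorm_nonneg power2_le_imp_le)
qed


lemma lin_add: "clinear_op T \<Longrightarrow> T (x + y) = T x + T y"
  by (simp add: clinear_op_def)
lemma lin_scaleC: "clinear_op T \<Longrightarrow> T (scaleC a x) = scaleC a (T x)"
  by (simp add: clinear_op_def)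
lemma lin_zero: "clinear_op T \<Longrightarrow> T 0 = 0"
  by (metis lin_scaleC scaleC_zero_left)
lemma lin_minus: "clinear_op T \<Longrightarrow> T (- x) = - T x"
  by (metis add.right_inverse lin_add lin_zero minus_unique)
lemma lin_diff: "clinear_op T \<Longrightarrow> T (x - y) = T x - T y"
  by (metis diff_conv_add_uminus lin_add lin_minus)

lemma unit_scale:
  fixes x :: "'a::complex_hilbert"
  assumes "x \<noteq> 0"
  shows "hnorm (scaleC (complex_of_real (1 / hnorm x)) x) = 1"
    and "x = scaleC (complex_of_real (hnorm x)) (scaleC (complex_of_real (1 / hnorm x)) x)"
proof -
  have h: "hnorm x > 0" using assms hnorm_eq_zero hnorm_nonneg by (metis order_less_le)
  show "hnorm (scaleC (complex_of_real (1 / hnorm x)) x) = 1"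
    using h by (simp add: hnorm_scaleC norm_divide)
  show "x = scaleC (complex_of_real (hnorm x)) (scaleC (complex_of_real (1 / hnorm x)) x)"
    using h by (simp add: scaleC_scaleC scaleC_one)
qed

lemma opnorm_bdd:
  assumes "bounded_op T"
  shows "bdd_above {hnorm (T x) | x. hnorm x \<le> 1}"
proof -
  obtain K where K: "\<And>x. hnorm (T x) \<le> K * hnorm x" using assms bounded_op_def by blast
  have "hnorm (T x) \<le> \<bar>K\<bar>" if "hnorm x \<le> 1" for x
  proof -
    have "K * hnorm x \<le> \<bar>K\<bar> * hnorm x" by (simp add: mult_right_mono)
    also have "\<dots> \<le> \<bar>K\<bar>" using that by (simp add: mult_left_le)
    finally show ?thesis using K[of x] by linarith
  qed
  then show ?thesis by (intro bdd_aboveI[of _ "\<bar>K\<bar>"]) auto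
qed

lemma opnorm_upper: "bounded_op T \<Longrightarrow> hnorm x \<le> 1 \<Longrightarrow> hnorm (T x) \<le> opnorm T"
  unfolding opnorm_def by (rule cSup_upper) (auto intro: opnorm_bdd)

lemma opnorm_nonneg: "bounded_op T \<Longrightarrow> 0 \<le> opnorm T"
  using opnorm_upper[of T 0] by (simp add: bounded_op_def lin_zero)

lemma opnorm_le:
  assumes "bounded_op T"
  shows "hnorm (T x) \<le> opnorm T * hnorm x"
proof (cases "x = 0")
  case True
  then show ?thesis using assms by (simp add: bounded_op_def lin_zero)
next
  case False
  define u where "u = scaleC (complex_of_real (1 / hnorm x)) x"
  have u1: "hnorm u = 1" and xu: "x = scaleC (complex_of_real (hnorm x)) u"
    using unit_scale[OF False] by (simp_all add: u_def)
  have lin: "clinear_op T" using assms bounded_op_def by blast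
  have "T x = scaleC (complex_of_real (hnorm x)) (T u)" by (subst xu) (simp add: lin_scaleC[OF lin])
  then have "hnorm (T x) = hnorm x * hnorm (T u)" by (simp add: hnorm_scaleC)
  also have "\<dots> \<le> hnorm x * opnorm T" using opnorm_upper[OF assms, of u] u1
    by (simp add: mult_left_mono)
  finally show ?thesis by (simp add: mult.commute)
qed

lemma opnorm_leI:
  assumes "0 \<le> K" and "\<And>x. hnorm (T x) \<le> K * hnorm x"
  shows "opnorm T \<le> K"
  unfolding opnorm_def
proof (rule cSup_least)
  show "{hnorm (T x) |x. hnorm x \<le> 1} \<noteq> {}" by (auto intro: exI[of _ 0])
next
  fix r assume "r \<in> {hnorm (T x) |x. hnorm x \<le> 1}"
  then obtain x where "r = hnorm (T x)" "hnorm x \<le> 1" by auto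
  then show "r \<le> K" using assms(2)[of x] assms(1) by (meson mult_left_le order_trans)
qed

lemma adjoint_lin:
  assumes "is_adjoint A As"
  shows "clinear_op As"
  unfolding clinear_op_def
proof (intro conjI allI)
  fix x y
  show "As (x + y) = As x + As y"
    by (rule cinner_ext2) (metis assms is_adjoint_def cinner_add_right)
next
  fix a x
  show "As (scaleC a x) = scaleC a (As x)"
    by (rule cinner_ext2) (metis assms is_adjoint_def cinner_scaleC_right)
qed

lemma adjoint_bounded:
  assumes "bounded_op A" and "is_adjoint A As"
  shows "bounded_op As"
proof -
  have "hnorm (As y) \<le> opnorm A * hnorm y" for y
  proof -
    have "(hnorm (As y))^2 = Re (cinner (A (As y)) y)"
      using assms(2) by (simp add: hnorm_sq is_adjoint_def)
    also have "\<dots> \<le> cmod (cinner (A (As y)) y)" by (rule complex_Re_le_cmod)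
    also have "\<dots> \<le> hnorm (A (As y)) * hnorm y" by (rule cauchy_schwarz)
    also have "\<dots> \<le> opnorm A * hnorm (As y) * hnorm y"
      by (simp add: mult_right_mono opnorm_le[OF assms(1)])
    finally have "hnorm (As y) * hnorm (As y) \<le> (opnorm A * hnorm y) * hnorm (As y)"
      by (simp add: power2_eq_square mult_ac)
    then show ?thesis
      by (metis hnorm_nonneg mult_le_cancel_right order_less_le mult_eq_0_iff
          mult_nonneg_nonneg opnorm_nonneg[OF assms(1)] not_le)
  qed
  then show ?thesis using adjoint_lin[OF assms(2)] by (auto simp: bounded_op_def)
qed


lemma selfadj_quad_bound:
  fixes T :: "'a::complex_hilbert \<Rightarrow> 'a"
  assumes lin: "clinear_op T"
    and w: "\<And>x. hnorm x = 1 \<Longrightarrow> cmod (cinner (T x) x) \<le> w"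
  shows "cmod (cinner (T z) z) \<le> w * (hnorm z)^2"
proof (cases "z = 0")
  case True then show ?thesis by (simp add: lin_zero[OF lin])
next
  case False
  define u where "u = scaleC (complex_of_real (1 / hnorm z)) z"
  have u1: "hnorm u = 1" and zu: "z = scaleC (complex_of_real (hnorm z)) u"
    using unit_scale[OF False] by (simp_all add: u_def)
  have "cinner (T z) z = complex_of_real ((hnorm z)^2) * cinner (T u) u"
    by (subst (1 2) zu) (simp add: lin_scaleC[OF lin] cinner_simps power2_eq_square)
  then have "cmod (cinner (T z) z) = (hnorm z)^2 * cmod (cinner (T u) u)"
    by (simp add: norm_mult norm_power)
  also have "\<dots> \<le> (hnorm z)^2 * w" using w[OF u1] by (simp add: mult_left_mono)
  finally show ?thesis by (simp add: mult.commute)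
qed

lemma selfadj_opnorm_le:
  fixes T :: "'a::complex_hilbert \<Rightarrow> 'a"
  assumes bT: "bounded_op T"
    and sa: "\<And>x y. cinner (T x) y = cinner x (T y)"
    and w0: "0 \<le> w"
    and w: "\<And>x. hnorm x = 1 \<Longrightarrow> cmod (cinner (T x) x) \<le> w"
  shows "opnorm T \<le> w"
proof (rule opnorm_leI[OF w0])
  have lin: "clinear_op T" using bT bounded_op_def by blast
  note q = selfadj_quad_bound[OF lin w]
  fix x
  show "hnorm (T x) \<le> w * hnorm x"
  proof (cases "T x = 0")
    case True then show ?thesis using w0 by simp
  next
    case False
    have tpos: "hnorm (T x) > 0" using False hnorm_eq_zero hnorm_nonneg by (metis order_less_le)
    define c where "c = hnorm x / hnorm (T x)"
    define y where "y = scaleC (complex_of_real c) (T x)"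
    have hy: "hnorm y = hnorm x" using tpos by (simp add: y_def c_def hnorm_scaleC norm_divide)
    have txy: "cinner (T x) y = complex_of_real (hnorm x * hnorm (T x))"
      using tpos by (simp add: y_def cinner_simps cinner_self_eq c_def power2_eq_square)
    have tyx: "cinner (T y) x = cnj (cinner (T x) y)"
      by (simp add: sa cinner_commute[of y "T x"])
    have "cinner (T (x + y)) (x + y) - cinner (T (x - y)) (x - y)
          = 2 * cinner (T x) y + 2 * cinner (T y) x"
      by (simp add: lin_add[OF lin] lin_diff[OF lin] cinner_simps algebra_simps)
    then have e1: "Re (cinner (T (x + y)) (x + y) - cinner (T (x - y)) (x - y))
               = 4 * (hnorm x * hnorm (T x))"
      by (simp add: tyx txy)
    have e2: "Re (cinner (T (x + y)) (x + y) - cinner (T (x - y)) (x - y))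
         \<le> cmod (cinner (T (x + y)) (x + y)) + cmod (cinner (T (x - y)) (x - y))"
      by (metis complex_Re_le_cmod norm_triangle_ineq4 order_trans)
    have "4 * (hnorm x * hnorm (T x)) \<le> w * (hnorm (x + y))^2 + w * (hnorm (x - y))^2"
      using q[of "x + y"] q[of "x - y"] e1 e2 by linarith
    also have "\<dots> = w * ((hnorm (x + y))^2 + (hnorm (x - y))^2)" by (simp add: algebra_simps)
    also have "(hnorm (x + y))^2 + (hnorm (x - y))^2 = 4 * (hnorm x)^2"
      by (simp add: hnorm_add_sq hnorm_diff_sq hy)
    also have "w * (4 * (hnorm x)^2) = 4 * (w * hnorm x * hnorm x)"
      by (simp add: power2_eq_square)
    finally have "hnorm x * hnorm (T x) \<le> hnorm x * (w * hnorm x)" by (simp add: mult_ac)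
    moreover have "x \<noteq> 0" using False lin_zero[OF lin] by auto
    then have "hnorm x > 0" using hnorm_eq_zero hnorm_nonneg by (metis order_less_le)
    ultimately show ?thesis by (simp add: mult_le_cancel_left_pos)
  qed
qed



lemma hnorm_minus: "hnorm (- x) = hnorm x"
  by (simp add: hnorm_def cinner_minus_left cinner_minus_right)

lemma hnorm_triangle_diff: "hnorm (x - y) \<le> hnorm x + hnorm y"
  using hnorm_triangle[of x "-y"] by (simp add: hnorm_minus)

lemma bounded_comb:
  fixes A B :: "'a::complex_hilbert \<Rightarrow> 'a"
  assumes "bounded_op A" "bounded_op B"
  shows "bounded_op (\<lambda>x. scaleC c (A x + B x))" "bounded_op (\<lambda>x. scaleC c (A x - B x))"
proof -
  have lA: "clinear_op A" and lB: "clinear_op B" using assms bounded_op_def by blast+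
  have l1: "clinear_op (\<lambda>x. scaleC c (A x + B x))" "clinear_op (\<lambda>x. scaleC c (A x - B x))"
    unfolding clinear_op_def
    by (simp_all add: lin_add[OF lA] lin_add[OF lB] lin_scaleC[OF lA] lin_scaleC[OF lB]
        scaleC_add_right scaleC_diff_right scaleC_scaleC mult.commute algebra_simps)
  have b: "hnorm (A x) + hnorm (B x) \<le> (opnorm A + opnorm B) * hnorm x" for x
    using opnorm_le[OF assms(1), of x] opnorm_le[OF assms(2), of x] by (simp add: algebra_simps)
  have "hnorm (scaleC c (A x + B x)) \<le> (cmod c * (opnorm A + opnorm B)) * hnorm x" for x
    using hnorm_triangle[of "A x" "B x"] b[of x]
    by (simp add: hnorm_scaleC mult.assoc mult_left_mono order_trans)
  then show "bounded_op (\<lambda>x. scaleC c (A x + B x))" using l1 bounded_op_def by blast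
  have "hnorm (scaleC c (A x - B x)) \<le> (cmod c * (opnorm A + opnorm B)) * hnorm x" for x
    using hnorm_triangle_diff[of "A x" "B x"] b[of x]
    by (simp add: hnorm_scaleC mult.assoc mult_left_mono order_trans)
  then show "bounded_op (\<lambda>x. scaleC c (A x - B x))" using l1 bounded_op_def by blast
qed

lemma approx_gen:
  fixes T :: "'a::complex_hilbert \<Rightarrow> 'a" and q :: "'a \<Rightarrow> real"
  assumes bT: "bounded_op T" and sa: "\<And>x y. cinner (T x) y = cinner x (T y)"
    and qT: "\<And>x. cinner (T x) x = complex_of_real (q x)"
    and ex: "\<exists>x::'a. hnorm x = 1" and e: "0 < \<epsilon>"
  shows "\<exists>x. hnorm x = 1 \<and> (opnorm T)^2 - 2 * opnorm T * \<epsilon> \<le> (q x)^2"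
proof -
  have "\<exists>x. hnorm x = 1 \<and> opnorm T - \<epsilon> < \<bar>q x\<bar>"
  proof (rule ccontr)
    assume "\<not> ?thesis"
    then have h: "\<And>x. hnorm x = 1 \<Longrightarrow> \<bar>q x\<bar> \<le> opnorm T - \<epsilon>" by (meson not_less)
    obtain x0 :: 'a where "hnorm x0 = 1" using ex by blast
    from h[OF this] have w0: "0 \<le> opnorm T - \<epsilon>" by linarith
    have "opnorm T \<le> opnorm T - \<epsilon>"
      by (rule selfadj_opnorm_le[OF bT sa w0]) (simp add: qT h)
    then show False using e by simp
  qed
  then obtain x where x1: "hnorm x = 1" and xq: "opnorm T - \<epsilon> < \<bar>q x\<bar>" by blast
  have N0: "0 \<le> opnorm T" using opnorm_nonneg[OF bT] .
  have "(opnorm T)^2 - 2 * opnorm T * \<epsilon> \<le> (q x)^2"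
  proof (cases "0 \<le> opnorm T - \<epsilon>")
    case True
    have "(opnorm T - \<epsilon>)^2 \<le> \<bar>q x\<bar>^2" using power_mono[OF less_imp_le[OF xq] True] .
    then show ?thesis
      apply (simp add: power2_eq_square algebra_simps)
      using mult_nonneg_nonneg[of \<epsilon> \<epsilon>] e by linarith
  next
    case False
    then have "opnorm T * (opnorm T - 2 * \<epsilon>) \<le> 0" using N0 e
      by (simp add: mult_nonneg_nonpos)
    then show ?thesis
      apply (simp add: power2_eq_square algebra_simps)
      using zero_le_square[of "q x"] by linarith
  qed
  then show ?thesis using x1 by blast
qed

lemma crawford_gen:
  fixes T :: "'a::complex_hilbert \<Rightarrow> 'a" and q :: "'a \<Rightarrow> real"
  assumes qT: "\<And>x. cinner (T x) x = complex_of_real (q x)"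
    and ex: "\<exists>x::'a. hnorm x = 1"
  shows "0 \<le> crawford T" and "\<And>x. hnorm x = 1 \<Longrightarrow> (crawford T)^2 \<le> (q x)^2"
proof -
  show c0: "0 \<le> crawford T" unfolding crawford_def
    by (rule cInf_greatest) (use ex in auto)
  fix x :: 'a assume "hnorm x = 1"
  then have "crawford T \<le> cmod (cinner (T x) x)" unfolding crawford_def
    by (intro cInf_lower) (auto intro!: bdd_belowI[of _ 0])
  then have "crawford T \<le> \<bar>q x\<bar>" by (simp add: qT)
  from power_mono[OF this c0, of 2] show "(crawford T)^2 \<le> (q x)^2" by simp
qed

locale opsetup =
  fixes A As :: "'a::complex_hilbert \<Rightarrow> 'a"
  assumes bA: "bounded_op A" and adj: "is_adjoint A As"
begin

lemma linA: "clinear_op A" using bA bounded_op_def by blast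
lemma linAs: "clinear_op As" using adjoint_lin[OF adj] .
lemma bAs: "bounded_op As" using adjoint_bounded[OF bA adj] .

lemma adjL: "cinner (A x) y = cinner x (As y)" using adj is_adjoint_def by blast
lemma adjL2: "cinner (As x) y = cinner x (A y)"
  by (metis adjL cinner_commute)

lemmas linsimps = lin_add[OF linA] lin_add[OF linAs] lin_scaleC[OF linA] lin_scaleC[OF linAs]
  lin_diff[OF linA] lin_diff[OF linAs] lin_minus[OF linA] lin_minus[OF linAs]

abbreviation "R \<equiv> ReOp A As"
abbreviation "I \<equiv> ImOp A As"

lemma bR: "bounded_op R"
  unfolding ReOp_def by (rule bounded_comb(1)[OF bA bAs])
lemma bI: "bounded_op I"
  unfolding ImOp_def by (rule bounded_comb(2)[OF bA bAs])
lemma linR: "clinear_op R" using bR bounded_op_def by blast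
lemma linI: "clinear_op I" using bI bounded_op_def by blast

lemma saR: "cinner (R x) y = cinner x (R y)"
  by (simp add: ReOp_def cinner_simps adjL adjL2 algebra_simps)
lemma saI: "cinner (I x) y = cinner x (I y)"
  by (simp add: ImOp_def cinner_simps adjL adjL2 algebra_simps)

lemma As_self: "cinner (As x) x = cnj (cinner (A x) x)"
  by (metis adjL2 cinner_commute)

lemma R_quad: "cinner (R x) x = complex_of_real (Re (cinner (A x) x))"
  by (simp add: ReOp_def cinner_simps As_self complex_eq_iff)
lemma I_quad: "cinner (I x) x = complex_of_real (Im (cinner (A x) x))"
  by (simp add: ImOp_def cinner_simps As_self complex_eq_iff)

lemma A_decomp: "A x = R x + scaleC \<i> (I x)"
  by (rule cinner_ext) (simp add: ReOp_def ImOp_def cinner_simps field_simps)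

lemma S_decomp: "As (A x) + A (As x) = scaleC 2 (R (R x) + I (I x))"
  by (rule cinner_ext) (simp add: ReOp_def ImOp_def cinner_simps linsimps field_simps)

lemma T4_decomp:
  "(As (A (As (A x) + A (As x))) + A (As (As (A x) + A (As x))))
     + scaleC 4 (ReOp (A \<circ> A) (As \<circ> As) (ReOp (A \<circ> A) (As \<circ> As) x))
   = scaleC 8 (R (R (R (R x))) + I (I (I (I x))))"
  by (rule cinner_ext) (simp add: ReOp_def ImOp_def cinner_simps linsimps field_simps)

lemma NR0: "0 \<le> opnorm R" using opnorm_nonneg[OF bR] .
lemma NI0: "0 \<le> opnorm I" using opnorm_nonneg[OF bI] .

lemma opnormA_le: "opnorm A \<le> opnorm R + opnorm I"
proof (rule opnorm_leI)
  show "0 \<le> opnorm R + opnorm I" using NR0 NI0 by simp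
  fix x
  have "hnorm (A x) \<le> hnorm (R x) + hnorm (I x)"
    using hnorm_triangle[of "R x" "scaleC \<i> (I x)"] by (simp add: A_decomp hnorm_scaleC)
  also have "\<dots> \<le> (opnorm R + opnorm I) * hnorm x"
    using opnorm_le[OF bR, of x] opnorm_le[OF bI, of x] by (simp add: algebra_simps)
  finally show "hnorm (A x) \<le> (opnorm R + opnorm I) * hnorm x" .
qed

lemma op4: "hnorm (R (R (R (R x)))) \<le> opnorm R ^ 4 * hnorm x"
proof -
  note l = opnorm_le[OF bR] NR0
  have "hnorm (R (R (R (R x)))) \<le> opnorm R * hnorm (R (R (R x)))" using l by simp
  also have "\<dots> \<le> opnorm R * (opnorm R * hnorm (R (R x)))" using l by (simp add: mult_left_mono)
  also have "\<dots> \<le> opnorm R * (opnorm R * (opnorm R * hnorm (R x)))" using l by (simp add: mult_left_mono)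
  also have "\<dots> \<le> opnorm R * (opnorm R * (opnorm R * (opnorm R * hnorm x)))" using l by (simp add: mult_left_mono)
  finally show ?thesis by (simp add: power4_eq_xxxx mult_ac)
qed

lemma op4I: "hnorm (I (I (I (I x)))) \<le> opnorm I ^ 4 * hnorm x"
proof -
  note l = opnorm_le[OF bI] NI0
  have "hnorm (I (I (I (I x)))) \<le> opnorm I * hnorm (I (I (I x)))" using l by simp
  also have "\<dots> \<le> opnorm I * (opnorm I * hnorm (I (I x)))" using l by (simp add: mult_left_mono)
  also have "\<dots> \<le> opnorm I * (opnorm I * (opnorm I * hnorm (I x)))" using l by (simp add: mult_left_mono)
  also have "\<dots> \<le> opnorm I * (opnorm I * (opnorm I * (opnorm I * hnorm x)))" using l by (simp add: mult_left_mono)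
  finally show ?thesis by (simp add: power4_eq_xxxx mult_ac)
qed

lemma op2: "hnorm (R (R x)) \<le> opnorm R ^ 2 * hnorm x"
proof -
  note l = opnorm_le[OF bR] NR0
  have "hnorm (R (R x)) \<le> opnorm R * hnorm (R x)" using l by simp
  also have "\<dots> \<le> opnorm R * (opnorm R * hnorm x)" using l by (simp add: mult_left_mono)
  finally show ?thesis by (simp add: power2_eq_square mult_ac)
qed

lemma op2I: "hnorm (I (I x)) \<le> opnorm I ^ 2 * hnorm x"
proof -
  note l = opnorm_le[OF bI] NI0
  have "hnorm (I (I x)) \<le> opnorm I * hnorm (I x)" using l by simp
  also have "\<dots> \<le> opnorm I * (opnorm I * hnorm x)" using l by (simp add: mult_left_mono)
  finally show ?thesis by (simp add: power2_eq_square mult_ac)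
qed

lemma opnormS_le: "opnorm (\<lambda>x. As (A x) + A (As x)) \<le> 2 * (opnorm R ^ 2 + opnorm I ^ 2)"
proof (rule opnorm_leI)
  show "0 \<le> 2 * (opnorm R ^ 2 + opnorm I ^ 2)" by simp
  fix x
  have "hnorm (As (A x) + A (As x)) \<le> 2 * (hnorm (R (R x)) + hnorm (I (I x)))"
    using hnorm_triangle[of "R (R x)" "I (I x)"] by (simp add: S_decomp hnorm_scaleC)
  also have "\<dots> \<le> 2 * (opnorm R ^ 2 + opnorm I ^ 2) * hnorm x"
    using op2[of x] op2I[of x] by (simp add: algebra_simps)
  finally show "hnorm (As (A x) + A (As x)) \<le> 2 * (opnorm R ^ 2 + opnorm I ^ 2) * hnorm x" .
qed

lemma opnormT4_le:
  "opnorm (\<lambda>x. (As (A (As (A x) + A (As x))) + A (As (As (A x) + A (As x))))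
     + scaleC 4 (ReOp (A \<circ> A) (As \<circ> As) (ReOp (A \<circ> A) (As \<circ> As) x)))
   \<le> 8 * (opnorm R ^ 4 + opnorm I ^ 4)"
proof (rule opnorm_leI)
  show "0 \<le> 8 * (opnorm R ^ 4 + opnorm I ^ 4)" by simp
  fix x
  have "hnorm (scaleC 8 (R (R (R (R x))) + I (I (I (I x)))))
        \<le> 8 * (hnorm (R (R (R (R x)))) + hnorm (I (I (I (I x)))))"
    using hnorm_triangle[of "R (R (R (R x)))" "I (I (I (I x)))"] by (simp add: hnorm_scaleC)
  also have "\<dots> \<le> 8 * (opnorm R ^ 4 + opnorm I ^ 4) * hnorm x"
    using op4[of x] op4I[of x] by (simp add: algebra_simps)
  finally show "hnorm ((As (A (As (A x) + A (As x))) + A (As (As (A x) + A (As x))))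
     + scaleC 4 (ReOp (A \<circ> A) (As \<circ> As) (ReOp (A \<circ> A) (As \<circ> As) x)))
     \<le> 8 * (opnorm R ^ 4 + opnorm I ^ 4) * hnorm x"
    by (simp only: T4_decomp)
qed

lemma om_inner:
  "cinner (scaleC (complex_of_real a) (A x) + scaleC (complex_of_real b) (As x)) x
   = complex_of_real a * cinner (A x) x + complex_of_real b * cnj (cinner (A x) x)"
  by (simp add: cinner_simps As_self)

lemma om_sq:
  fixes a b :: real and z :: complex
  shows "(cmod (complex_of_real a * z + complex_of_real b * cnj z))^2
     = (a + b)^2 * (Re z)^2 + (a - b)^2 * (Im z)^2"
  by (subst cmod_power2) (simp add: power2_eq_square algebra_simps)

lemma quad_le: "hnorm x = 1 \<Longrightarrow> cmod (cinner (A x) x) \<le> opnorm A"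
  using cauchy_schwarz[of "A x" x] opnorm_le[OF bA, of x] by simp

lemma W_upper:
  assumes "hnorm x = 1"
  shows "cmod (cinner (scaleC (complex_of_real (\<phi> t)) (A x) + scaleC (complex_of_real (\<psi> t)) (As x)) x)
         \<le> omega_t t \<phi> \<psi> A As"
  unfolding omega_t_def
proof (rule cSup_upper)
  show "cmod (cinner (scaleC (complex_of_real (\<phi> t)) (A x) + scaleC (complex_of_real (\<psi> t)) (As x)) x)
    \<in> {cmod (cinner (scaleC (complex_of_real (\<phi> t)) (A x) + scaleC (complex_of_real (\<psi> t)) (As x)) x) |x.
        hnorm x = 1}" using assms by blast
  have "cmod (cinner (scaleC (complex_of_real (\<phi> t)) (A y) + scaleC (complex_of_real (\<psi> t)) (As y)) y)
        \<le> (\<bar>\<phi> t\<bar> + \<bar>\<psi> t\<bar>) * opnorm A" if "hnorm y = 1" for y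
  proof -
    have "cmod (cinner (scaleC (complex_of_real (\<phi> t)) (A y) + scaleC (complex_of_real (\<psi> t)) (As y)) y)
       \<le> \<bar>\<phi> t\<bar> * cmod (cinner (A y) y) + \<bar>\<psi> t\<bar> * cmod (cinner (A y) y)"
      unfolding om_inner by (rule order_trans[OF norm_triangle_ineq]) (simp add: norm_mult)
    also have "\<dots> \<le> (\<bar>\<phi> t\<bar> + \<bar>\<psi> t\<bar>) * opnorm A"
      using quad_le[OF that]
      by (simp add: distrib_right add_mono mult_left_mono)
    finally show ?thesis .
  qed
  then show "bdd_above {cmod (cinner (scaleC (complex_of_real (\<phi> t)) (A x) + scaleC (complex_of_real (\<psi> t)) (As x)) x) |x.
        hnorm x = 1}"
    by (intro bdd_aboveI[of _ "(\<bar>\<phi> t\<bar> + \<bar>\<psi> t\<bar>) * opnorm A"]) auto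
qed

lemma exists_unit:
  assumes "\<exists>x::'a. x \<noteq> 0"
  shows "\<exists>x::'a. hnorm x = 1"
  using assms unit_scale(1) by blast

lemma W_nonneg:
  assumes "\<exists>x::'a. x \<noteq> 0"
  shows "0 \<le> omega_t t \<phi> \<psi> A As"
proof -
  obtain x :: 'a where "hnorm x = 1" using exists_unit[OF assms] by blast
  from W_upper[OF this, of \<phi> t \<psi>] show ?thesis by (rule order_trans[OF norm_ge_zero])
qed

lemma W_key:
  assumes "hnorm x = 1"
  shows "(min \<bar>\<phi> t + \<psi> t\<bar> \<bar>\<phi> t - \<psi> t\<bar>)^2 * ((Re (cinner (A x) x))^2 + (Im (cinner (A x) x))^2)
    \<le> (omega_t t \<phi> \<psi> A As)^2"
proof -
  define m where "m = min \<bar>\<phi> t + \<psi> t\<bar> \<bar>\<phi> t - \<psi> t\<bar>"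
  define z where "z = cinner (A x) x"
  have m0: "0 \<le> m" by (simp add: m_def)
  have "m \<le> \<bar>\<phi> t + \<psi> t\<bar>" by (simp add: m_def)
  from power_mono[OF this m0, of 2] have m1: "m^2 \<le> (\<phi> t + \<psi> t)^2" by simp
  have "m \<le> \<bar>\<phi> t - \<psi> t\<bar>" by (simp add: m_def)
  from power_mono[OF this m0, of 2] have m2: "m^2 \<le> (\<phi> t - \<psi> t)^2" by simp
  have "m^2 * ((Re z)^2 + (Im z)^2) \<le> (\<phi> t + \<psi> t)^2 * (Re z)^2 + (\<phi> t - \<psi> t)^2 * (Im z)^2"
    using m1 m2 by (simp add: distrib_left add_mono mult_right_mono)
  also have "\<dots> = (cmod (cinner (scaleC (complex_of_real (\<phi> t)) (A x) + scaleC (complex_of_real (\<psi> t)) (As x)) x))^2"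
    by (simp add: om_inner om_sq z_def)
  also have "\<dots> \<le> (omega_t t \<phi> \<psi> A As)^2"
    using W_upper[OF assms] by (simp add: power_mono)
  finally show ?thesis by (simp add: m_def z_def)
qed

lemma main_bound_R:
  assumes ex: "\<exists>x::'a. x \<noteq> 0"
  shows "(min \<bar>\<phi> t + \<psi> t\<bar> \<bar>\<phi> t - \<psi> t\<bar>)^2 * ((opnorm R)^2 + (crawford I)^2)
    \<le> (omega_t t \<phi> \<psi> A As)^2"
proof (rule field_le_epsilon)
  define m where "m = min \<bar>\<phi> t + \<psi> t\<bar> \<bar>\<phi> t - \<psi> t\<bar>"
  define N where "N = opnorm R"
  have N0: "0 \<le> N" using NR0 by (simp add: N_def)
  fix e :: real assume e: "0 < e"
  define K where "K = 2 * m^2 * N + 1"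
  have K1: "1 \<le> K" using N0 by (simp add: K_def)
  define \<epsilon> where "\<epsilon> = e / K"
  have ep: "0 < \<epsilon>" using e K1 by (simp add: \<epsilon>_def)
  have ex1: "\<exists>x::'a. hnorm x = 1" using exists_unit[OF ex] .
  obtain x where x1: "hnorm x = 1" and
    xa: "N^2 - 2 * N * \<epsilon> \<le> (Re (cinner (A x) x))^2"
    using approx_gen[OF bR saR R_quad ex1 ep] unfolding N_def by blast
  have ci: "(crawford I)^2 \<le> (Im (cinner (A x) x))^2"
    using crawford_gen(2)[OF I_quad ex1 x1] .
  have "m^2 * (N^2 - 2 * N * \<epsilon> + (crawford I)^2)
      \<le> m^2 * ((Re (cinner (A x) x))^2 + (Im (cinner (A x) x))^2)"
    using xa ci by (simp add: mult_left_mono)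
  also have "\<dots> \<le> (omega_t t \<phi> \<psi> A As)^2" using W_key[OF x1] by (simp add: m_def)
  finally have h: "m^2 * (N^2 + (crawford I)^2) \<le> (omega_t t \<phi> \<psi> A As)^2 + 2 * m^2 * N * \<epsilon>"
    by (simp add: algebra_simps)
  have "2 * m^2 * N * \<epsilon> = (2 * m^2 * N) * e / K" by (simp add: \<epsilon>_def)
  also have "\<dots> \<le> e"
  proof -
    have Kpos: "0 < K" using K1 by simp
    have "2 * m^2 * N * e \<le> e * K" using e by (simp add: K_def algebra_simps)
    then show ?thesis by (simp add: pos_divide_le_eq[OF Kpos])
  qed
  finally show "m^2 * ((opnorm R)^2 + (crawford I)^2) \<le> (omega_t t \<phi> \<psi> A As)^2 + e"
    using h by (simp add: N_def)
qed

lemma main_bound_I: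
  assumes ex: "\<exists>x::'a. x \<noteq> 0"
  shows "(min \<bar>\<phi> t + \<psi> t\<bar> \<bar>\<phi> t - \<psi> t\<bar>)^2 * ((opnorm I)^2 + (crawford R)^2)
    \<le> (omega_t t \<phi> \<psi> A As)^2"
proof (rule field_le_epsilon)
  define m where "m = min \<bar>\<phi> t + \<psi> t\<bar> \<bar>\<phi> t - \<psi> t\<bar>"
  define N where "N = opnorm I"
  have N0: "0 \<le> N" using NI0 by (simp add: N_def)
  fix e :: real assume e: "0 < e"
  define K where "K = 2 * m^2 * N + 1"
  have K1: "1 \<le> K" using N0 by (simp add: K_def)
  define \<epsilon> where "\<epsilon> = e / K"
  have ep: "0 < \<epsilon>" using e K1 by (simp add: \<epsilon>_def)
  have ex1: "\<exists>x::'a. hnorm x = 1" using exists_unit[OF ex] .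
  obtain x where x1: "hnorm x = 1" and
    xa: "N^2 - 2 * N * \<epsilon> \<le> (Im (cinner (A x) x))^2"
    using approx_gen[OF bI saI I_quad ex1 ep] unfolding N_def by blast
  have ci: "(crawford R)^2 \<le> (Re (cinner (A x) x))^2"
    using crawford_gen(2)[OF R_quad ex1 x1] .
  have "m^2 * (N^2 - 2 * N * \<epsilon> + (crawford R)^2)
      \<le> m^2 * ((Re (cinner (A x) x))^2 + (Im (cinner (A x) x))^2)"
    using xa ci by (simp add: mult_left_mono)
  also have "\<dots> \<le> (omega_t t \<phi> \<psi> A As)^2" using W_key[OF x1] by (simp add: m_def)
  finally have h: "m^2 * (N^2 + (crawford R)^2) \<le> (omega_t t \<phi> \<psi> A As)^2 + 2 * m^2 * N * \<epsilon>"
    by (simp add: algebra_simps)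
  have "2 * m^2 * N * \<epsilon> = (2 * m^2 * N) * e / K" by (simp add: \<epsilon>_def)
  also have "\<dots> \<le> e"
  proof -
    have Kpos: "0 < K" using K1 by simp
    have "2 * m^2 * N * e \<le> e * K" using e by (simp add: K_def algebra_simps)
    then show ?thesis by (simp add: pos_divide_le_eq[OF Kpos])
  qed
  finally show "m^2 * ((opnorm I)^2 + (crawford R)^2) \<le> (omega_t t \<phi> \<psi> A As)^2 + e"
    using h by (simp add: N_def)
qed

end

lemma max_eq_real: "2 * max x y = x + y + \<bar>x - y\<bar>" for x y :: real
  by (cases "x \<le> y") (simp_all add: max_def abs_if)

theorem theorem3p2:
  fixes A As :: "'a::complex_hilbert \<Rightarrow> 'a"
    and \<phi> \<psi> :: "real \<Rightarrow> real" and t :: real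
  assumes "continuous_on {0..1} \<phi>" and "continuous_on {0..1} \<psi>"
    and "bounded_op A" and "is_adjoint A As"
    and "t \<in> {0..1}"
    and "\<exists>x::'a. x \<noteq> 0"
  defines "m \<equiv> min \<bar>\<phi> t + \<psi> t\<bar> \<bar>\<phi> t - \<psi> t\<bar>"
  shows "(omega_t t \<phi> \<psi> A As \<ge>
           m * (opnorm A / 2 + \<bar>opnorm (ReOp A As) - opnorm (ImOp A As)\<bar> / 2))
    \<and> ((omega_t t \<phi> \<psi> A As)^2 \<ge>
           m^2 * (opnorm (\<lambda>x. As (A x) + A (As x)) / 4
                  + \<bar>(opnorm (ReOp A As))^2 - (opnorm (ImOp A As))^2\<bar> / 2))
    \<and> ((omega_t t \<phi> \<psi> A As)^2 \<ge>
           m^2 * (opnorm (\<lambda>x. As (A x) + A (As x)) / 4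
                  + ((crawford (ReOp A As))^2 + (crawford (ImOp A As))^2) / 2
                  + \<bar>((opnorm (ReOp A As))^2 - (opnorm (ImOp A As))^2) / 2
                     + ((crawford (ImOp A As))^2 - (crawford (ReOp A As))^2) / 2\<bar>))
    \<and> ((omega_t t \<phi> \<psi> A As)^4 \<ge>
           m^4 * (opnorm (\<lambda>x. (As (A (As (A x) + A (As x))) + A (As (As (A x) + A (As x))))
                             + scaleC 4 (ReOp (A \<circ> A) (As \<circ> As) (ReOp (A \<circ> A) (As \<circ> As) x))) / 16
                  + \<bar>(opnorm (ReOp A As))^4 - (opnorm (ImOp A As))^4\<bar> / 2))"
proof -
  interpret opsetup A As using assms(3,4) by unfold_locales
  define W where "W = omega_t t \<phi> \<psi> A As"
  define NR where "NR = opnorm (ReOp A As)"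
  define NI where "NI = opnorm (ImOp A As)"
  define cR where "cR = crawford (ReOp A As)"
  define cI where "cI = crawford (ImOp A As)"
  have ex1: "\<exists>x::'a. hnorm x = 1" using exists_unit[OF assms(6)] .
  have W0: "0 \<le> W" unfolding W_def using W_nonneg[OF assms(6)] .
  have m0: "0 \<le> m" unfolding m_def by simp
  have NR0': "0 \<le> NR" unfolding NR_def using NR0 .
  have NI0': "0 \<le> NI" unfolding NI_def using NI0 .
  have cR0: "0 \<le> cR" unfolding cR_def using crawford_gen(1)[OF R_quad ex1] .
  have cI0: "0 \<le> cI" unfolding cI_def using crawford_gen(1)[OF I_quad ex1] .
  have h1: "m^2 * (NR^2 + cI^2) \<le> W^2"
    using main_bound_R[OF assms(6), of \<phi> t \<psi>] by (simp add: m_def W_def NR_def cI_def)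
  have h2: "m^2 * (NI^2 + cR^2) \<le> W^2"
    using main_bound_I[OF assms(6), of \<phi> t \<psi>] by (simp add: m_def W_def NI_def cR_def)
  have nA: "opnorm A \<le> NR + NI" using opnormA_le by (simp add: NR_def NI_def)
  have nS: "opnorm (\<lambda>x. As (A x) + A (As x)) \<le> 2 * (NR^2 + NI^2)"
    using opnormS_le by (simp add: NR_def NI_def)
  have nT: "opnorm (\<lambda>x. (As (A (As (A x) + A (As x))) + A (As (As (A x) + A (As x))))
                             + scaleC 4 (ReOp (A \<circ> A) (As \<circ> As) (ReOp (A \<circ> A) (As \<circ> As) x)))
     \<le> 8 * (NR^4 + NI^4)"
    using opnormT4_le by (simp add: NR_def NI_def)
  have q1: "m^2 * NR^2 \<le> W^2"
  proof -
    have "0 \<le> m^2 * cI^2" by simp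
    moreover have "m^2 * (NR^2 + cI^2) = m^2 * NR^2 + m^2 * cI^2" by (simp add: distrib_left)
    ultimately show ?thesis using h1 by linarith
  qed
  have q2: "m^2 * NI^2 \<le> W^2"
  proof -
    have "0 \<le> m^2 * cR^2" by simp
    moreover have "m^2 * (NI^2 + cR^2) = m^2 * NI^2 + m^2 * cR^2" by (simp add: distrib_left)
    ultimately show ?thesis using h2 by linarith
  qed
  have s1: "(m * NR)^2 \<le> W^2" using q1 by (simp add: power_mult_distrib)
  have s2: "(m * NI)^2 \<le> W^2" using q2 by (simp add: power_mult_distrib)
  have r1: "m * NR \<le> W" using power2_le_imp_le[OF s1 W0] .
  have r2: "m * NI \<le> W" using power2_le_imp_le[OF s2 W0] .
  have P1: "m * (opnorm A / 2 + \<bar>NR - NI\<bar> / 2) \<le> W"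
  proof -
    have "opnorm A / 2 + \<bar>NR - NI\<bar> / 2 \<le> max NR NI" using nA max_eq_real[of NR NI] by (simp add: field_simps)
    then have "m * (opnorm A / 2 + \<bar>NR - NI\<bar> / 2) \<le> m * max NR NI" using m0 by (rule mult_left_mono)
    also have "\<dots> \<le> W" using r1 r2 by (simp add: max_def)
    finally show ?thesis .
  qed
  have P2: "m^2 * (opnorm (\<lambda>x. As (A x) + A (As x)) / 4 + \<bar>NR^2 - NI^2\<bar> / 2) \<le> W^2"
  proof -
    have "opnorm (\<lambda>x. As (A x) + A (As x)) / 4 + \<bar>NR^2 - NI^2\<bar> / 2 \<le> max (NR^2) (NI^2)"
      using nS max_eq_real[of "NR^2" "NI^2"] by (simp add: field_simps)
    then have "m^2 * (opnorm (\<lambda>x. As (A x) + A (As x)) / 4 + \<bar>NR^2 - NI^2\<bar> / 2) \<le> m^2 * max (NR^2) (NI^2)"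
      by (rule mult_left_mono) simp
    also have "\<dots> \<le> W^2" using q1 q2 by (simp add: max_def)
    finally show ?thesis .
  qed
  have P3: "m^2 * (opnorm (\<lambda>x. As (A x) + A (As x)) / 4 + (cR^2 + cI^2) / 2
                  + \<bar>(NR^2 - NI^2) / 2 + (cI^2 - cR^2) / 2\<bar>) \<le> W^2"
  proof -
    have "opnorm (\<lambda>x. As (A x) + A (As x)) / 4 + (cR^2 + cI^2) / 2
                  + \<bar>(NR^2 - NI^2) / 2 + (cI^2 - cR^2) / 2\<bar> \<le> max (NR^2 + cI^2) (NI^2 + cR^2)"
      proof -
      have e0: "(NR^2 - NI^2) / 2 + (cI^2 - cR^2) / 2 = ((NR^2 + cI^2) - (NI^2 + cR^2)) / 2"
        by (simp add: field_simps)
      have "\<bar>(NR^2 - NI^2) / 2 + (cI^2 - cR^2) / 2\<bar> = \<bar>(NR^2 + cI^2) - (NI^2 + cR^2)\<bar> / 2"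
        by (simp only: e0 abs_divide)
      then show ?thesis using nS max_eq_real[of "NR^2 + cI^2" "NI^2 + cR^2"] by (simp add: field_simps)
    qed
    then have "m^2 * (opnorm (\<lambda>x. As (A x) + A (As x)) / 4 + (cR^2 + cI^2) / 2
                  + \<bar>(NR^2 - NI^2) / 2 + (cI^2 - cR^2) / 2\<bar>) \<le> m^2 * max (NR^2 + cI^2) (NI^2 + cR^2)"
      by (rule mult_left_mono) simp
    also have "\<dots> \<le> W^2" using h1 h2 by (simp add: max_def)
    finally show ?thesis .
  qed
  have q1': "m^4 * NR^4 \<le> W^4"
  proof -
    have "(m^2 * NR^2)^2 \<le> (W^2)^2" using power_mono[OF q1, of 2] by simp
    then show ?thesis by (simp add: power_mult_distrib flip: power_mult)
  qed
  have q2': "m^4 * NI^4 \<le> W^4"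
  proof -
    have "(m^2 * NI^2)^2 \<le> (W^2)^2" using power_mono[OF q2, of 2] by simp
    then show ?thesis by (simp add: power_mult_distrib flip: power_mult)
  qed
  have P4: "m^4 * (opnorm (\<lambda>x. (As (A (As (A x) + A (As x))) + A (As (As (A x) + A (As x))))
                             + scaleC 4 (ReOp (A \<circ> A) (As \<circ> As) (ReOp (A \<circ> A) (As \<circ> As) x))) / 16
                  + \<bar>NR^4 - NI^4\<bar> / 2) \<le> W^4"
  proof -
    have "opnorm (\<lambda>x. (As (A (As (A x) + A (As x))) + A (As (As (A x) + A (As x))))
                             + scaleC 4 (ReOp (A \<circ> A) (As \<circ> As) (ReOp (A \<circ> A) (As \<circ> As) x))) / 16
                  + \<bar>NR^4 - NI^4\<bar> / 2 \<le> max (NR^4) (NI^4)"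
      using nT max_eq_real[of "NR^4" "NI^4"] by (simp add: field_simps)
    then have "m^4 * (opnorm (\<lambda>x. (As (A (As (A x) + A (As x))) + A (As (As (A x) + A (As x))))
                             + scaleC 4 (ReOp (A \<circ> A) (As \<circ> As) (ReOp (A \<circ> A) (As \<circ> As) x))) / 16
                  + \<bar>NR^4 - NI^4\<bar> / 2) \<le> m^4 * max (NR^4) (NI^4)"
      by (rule mult_left_mono) (simp add: m0)
    also have "\<dots> \<le> W^4" using q1' q2' by (simp add: max_def)
    finally show ?thesis .
  qed
  show ?thesis using P1 P2 P3 P4 by (simp add: W_def NR_def NI_def cR_def cI_def)
qed

end
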